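(* If MAPTree is run without a time budget (so that its main loop exits only when $LB[r]\ge UB[r]$), its output is a minimum-cost solution graph of $\mathcal G_{\mathcal X,\mathcal Y}$.
   Context: Let $x_1,\dots,x_N\in\{0,1\}^F$ be a binary dataset $\mathcal X$ with labels $\mathcal Y\in\{0,1\}^N$, $[N]=\{1,\dots,N\}$. For $\mathcal I\subseteq[N]$, $f\in[F]$, $k\in\{0,1\}$ let $\mathcal I|_{f=k}=\{i\in\mathcal I:(x_i)_f=k\}$, $c^k(\mathcal I)=|\{i\in\mathcal I:y_i=k\}|$, $\mathcal V(\mathcal I)=\{f:\mathcal I|_{f=0}\neq\emptyset\text{ and }\mathcal I|_{f=1}\neq\emptyset\}$. Fix $\rho^1,\rho^0>0$, $\alpha\in(0,1)$, $\beta\ge0$; $\ell_{\rm leaf}(c^1,c^0)=B(c^1+\rho^1,c^0+\rho^0)/B(\rho^1,\rho^0)$ ($B$ the Beta function), $p_{\rm split}(d)=\alpha(1+d)^{-\beta}$, $p_{\rm leaf}(d,\mathcal I)=1$ if $\mathcal V(\mathcal I)=\emptyset$ else $1-p_{\rm split}(d)$, $p_{\rm inner}(d,\mathcal I)=0$ if $\mathcal V(\mathcal I)=\emptyset$ else $p_{\rm split}(d)/|\mathcal V(\mathcal I)|$; $-\log0=+\infty$, and a minimum over an empty set is $+\infty$. Graph $\mathcal G=\mathcal G_{\mathcal X,\mathcal Y}$: for nonempty $\mathcal I\subseteq[N]$, $d\in\{0,\dots,F\}$, an OR node $o_{\mathcal I,d}$ with terminal child $t_{\mathcal I,d}$ (edge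 cost $-\log p_{\rm leaf}(d,\mathcal I)-\log\ell_{\rm leaf}(c^1(\mathcal I),c^0(\mathcal I))$); for $d<F$, $f\in\mathcal V(\mathcal I)$, an AND child $a_{\mathcal I,d,f}$ (edge cost $-\log p_{\rm inner}(d,\mathcal I)$) with cost-$0$ edges to $o_{\mathcal I|_{f=0},d+1}$, $o_{\mathcal I|_{f=1},d+1}$; root $r=o_{[N],0}$; only nodes reachable from $r$ kept. A solution graph is a node set $\mathcal S\ni r$, all of whose nodes are reachable from $r$ inside $\mathcal S$, with every AND node of $\mathcal S$ having both children in $\mathcal S$ and every OR node of $\mathcal S$ exactly one child in $\mathcal S$; its cost is the sum of costs of edges $u\to v$ with $u,v\in\mathcal S$. Heuristic: $h(o_{\mathcal I,d})=-\max\{\log\ell_{\rm leaf}(c^1(\mathcal I),c^0(\mathcal I)),\log p_{\rm split}(d)+\log\ell_{\rm leaf}(c^1(\mathcal I),0)+\log\ell_{\rm leaf}(0,c^0(\mathcal I))\}$. MAPTree maintains a node set $\mathcal G'$, a set $\mathcal E$ of expanded OR nodes, and values $LB[u],UB[u]\in\mathbb R\cup\{+\infty\}$ for OR nodes ($UB[u]=+\infty$ until set); for an AND node $a$ with children $o_0,o_1$, $LB[a]=LB[o_0]+LB[o_1]$ and $UB[a]=UB[o_0]+UB[o_1]$. Initialize $\mathcal G'=\{r\}$, $\mathcal E=\emptyset$, $LB[r]=h(r)$, $UB[r]=+\infty$. While $LB[r]<UB[r]$ (and optionally while time remains): (1) $o:=r$; while $o\in\mathcal E$, choose an AND child $a^*$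 of $o$ minimizing $\mathrm{cost}(o,a)+LB[a]$, with children $o_0$ (value-0 side) and $o_1$, and set $o:=o_0$ if $UB[o_0]-LB[o_0]>UB[o_1]-LB[o_1]$, else $o:=o_1$. (2) Add $o$ to $\mathcal E$ and its terminal child to $\mathcal G'$; for each AND child $a$ of $o$ with children $o_0,o_1$, add $a,o_0,o_1$ to $\mathcal G'$ and set $LB[o_0]:=h(o_0)$, $LB[o_1]:=h(o_1)$. (3) Starting from $Q=\{o\}$, repeatedly remove from $Q$ an OR node $u$ of maximal depth, compute $v=\min\{\min_a(\mathrm{cost}(u,a)+LB[a]),\mathrm{cost}(u,t_u)\}$ over the AND children $a$ and terminal child $t_u$ of $u$; if $v>LB[u]$, set $LB[u]:=v$ and add to $Q$ every OR node of $\mathcal G'$ that is the parent of an AND node of $\mathcal G'$ having $u$ as child. (4) The same with $UB$ in place of $LB$, updating when $v<UB[u]$. Output $\mathrm{getSolution}(r)$, where for an OR node $u$ with terminal child $t$: if $u$ has no AND child or $\mathrm{cost}(u,t)\le\min_a(\mathrm{cost}(u,a)+UB[a])$, return $\{u,t\}$; else, with $a^*$ attaining the minimum and children $u_0,u_1$, return $\{u,a^*\}\cup\mathrm{getSolution}(u_0)\cup\mathrm{getSolution}(u_1)$. *)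

theory Defs
  imports "HOL-Analysis.Analysis"
begin

text \<open>Dataset: N points, F binary features. Feature value (x_i)_f is xX i f (True = 1),
  label y_i is yY i (True = 1). Points are indexed by 1..N, features by 1..F.\<close>

record inst =
  nN :: nat
  nF :: nat
  xX :: "nat \<Rightarrow> nat \<Rightarrow> bool"
  yY :: "nat \<Rightarrow> bool"
  rho1 :: real
  rho0 :: real
  alpha :: real
  beta :: real

definition restr :: "inst \<Rightarrow> nat set \<Rightarrow> nat \<Rightarrow> bool \<Rightarrow> nat set" where
  "restr P I f k = {i \<in> I. xX P i f = k}"

definition cnt :: "inst \<Rightarrow> bool \<Rightarrow> nat set \<Rightarrow> nat" where
  "cnt P k I = card {i \<in> I. yY P i = k}"

definition Vf :: "inst \<Rightarrow> nat set \<Rightarrow> nat set" where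
  "Vf P I = {f \<in> {1..nF P}. restr P I f False \<noteq> {} \<and> restr P I f True \<noteq> {}}"

definition ell :: "inst \<Rightarrow> nat \<Rightarrow> nat \<Rightarrow> real" where
  "ell P c1 c0 = Beta (real c1 + rho1 P) (real c0 + rho0 P) / Beta (rho1 P) (rho0 P)"

definition psplit :: "inst \<Rightarrow> nat \<Rightarrow> real" where
  "psplit P d = alpha P * (1 + real d) powr (- beta P)"

definition pleaf :: "inst \<Rightarrow> nat \<Rightarrow> nat set \<Rightarrow> real" where
  "pleaf P d I = (if Vf P I = {} then 1 else 1 - psplit P d)"

definition pinner :: "inst \<Rightarrow> nat \<Rightarrow> nat set \<Rightarrow> real" where
  "pinner P d I = (if Vf P I = {} then 0 else psplit P d / real (card (Vf P I)))"

definition elog :: "real \<Rightarrow> ereal" where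
  "elog p = (if p = 0 then - \<infinity> else ereal (ln p))"

datatype node = ORn "nat set" nat | TRn "nat set" nat | ANDn "nat set" nat nat

fun depth :: "node \<Rightarrow> nat" where
  "depth (ORn I d) = d" | "depth (TRn I d) = d" | "depth (ANDn I d f) = d"

fun is_OR :: "node \<Rightarrow> bool" where
  "is_OR (ORn I d) = True" | "is_OR _ = False"

fun is_AND :: "node \<Rightarrow> bool" where
  "is_AND (ANDn I d f) = True" | "is_AND _ = False"

definition root :: "inst \<Rightarrow> node" where
  "root P = ORn {1..nN P} 0"

fun ch0 :: "inst \<Rightarrow> node \<Rightarrow> node" where
  "ch0 P (ANDn I d f) = ORn (restr P I f False) (Suc d)" | "ch0 P v = v"

fun ch1 :: "inst \<Rightarrow> node \<Rightarrow> node" where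
  "ch1 P (ANDn I d f) = ORn (restr P I f True) (Suc d)" | "ch1 P v = v"

fun tchild :: "node \<Rightarrow> node" where
  "tchild (ORn I d) = TRn I d" | "tchild v = v"

text \<open>Edge relation of the graph (before restricting to nodes reachable from the root).\<close>
fun edge :: "inst \<Rightarrow> node \<Rightarrow> node \<Rightarrow> bool" where
  "edge P (ORn I d) (TRn J e) = (J = I \<and> e = d)"
| "edge P (ORn I d) (ANDn J e f) = (J = I \<and> e = d \<and> d < nF P \<and> f \<in> Vf P I)"
| "edge P (ANDn I d f) (ORn J e) =
     (e = Suc d \<and> (J = restr P I f False \<or> J = restr P I f True))"
| "edge P _ _ = False"

definition Gnodes :: "inst \<Rightarrow> node set" where
  "Gnodes P = {v. (edge P)\<^sup>*\<^sup>* (root P) v}"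

fun ecost :: "inst \<Rightarrow> node \<Rightarrow> node \<Rightarrow> ereal" where
  "ecost P (ORn I d) (TRn J e) =
     - elog (pleaf P d I) - elog (ell P (cnt P True I) (cnt P False I))"
| "ecost P (ORn I d) (ANDn J e f) = - elog (pinner P d I)"
| "ecost P _ _ = 0"

definition andch :: "inst \<Rightarrow> node \<Rightarrow> node set" where
  "andch P u = {a. edge P u a \<and> is_AND a}"

fun hh :: "inst \<Rightarrow> node \<Rightarrow> ereal" where
  "hh P (ORn I d) = - max (elog (ell P (cnt P True I) (cnt P False I)))
       (elog (psplit P d) + elog (ell P (cnt P True I) 0) + elog (ell P 0 (cnt P False I)))"
| "hh P _ = 0"

definition is_sol :: "inst \<Rightarrow> node set \<Rightarrow> bool" where
  "is_sol P S \<longleftrightarrow>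
     root P \<in> S \<and> root P \<in> Gnodes P \<and>
     (\<forall>v\<in>S. (\<lambda>u w. edge P u w \<and> u \<in> S \<and> w \<in> S)\<^sup>*\<^sup>* (root P) v) \<and>
     (\<forall>a\<in>S. is_AND a \<longrightarrow> (\<forall>w. edge P a w \<longrightarrow> w \<in> S)) \<and>
     (\<forall>u\<in>S. is_OR u \<longrightarrow> (\<exists>!w. w \<in> S \<and> edge P u w))"

definition sol_cost :: "inst \<Rightarrow> node set \<Rightarrow> ereal" where
  "sol_cost P S = (\<Sum>(u, w) \<in> {(u, w). u \<in> S \<and> w \<in> S \<and> edge P u w}. ecost P u w)"

definition is_min_sol :: "inst \<Rightarrow> node set \<Rightarrow> bool" where
  "is_min_sol P S \<longleftrightarrow> is_sol P S \<and> (\<forall>S'. is_sol P S' \<longrightarrow> sol_cost P S \<le> sol_cost P S')"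

record st =
  gp :: "node set"   \<comment> \<open>the explored graph G'\<close>
  ex :: "node set"   \<comment> \<open>expanded OR nodes E\<close>
  lb :: "node \<Rightarrow> ereal"
  ub :: "node \<Rightarrow> ereal"

definition lbA :: "inst \<Rightarrow> st \<Rightarrow> node \<Rightarrow> ereal" where
  "lbA P s a = lb s (ch0 P a) + lb s (ch1 P a)"

definition ubA :: "inst \<Rightarrow> st \<Rightarrow> node \<Rightarrow> ereal" where
  "ubA P s a = ub s (ch0 P a) + ub s (ch1 P a)"

definition gap :: "st \<Rightarrow> node \<Rightarrow> ereal" where
  "gap s u = ub s u - lb s u"

definition init :: "inst \<Rightarrow> st" where
  "init P = \<lparr>gp = {root P}, ex = {}, lb = (\<lambda>_. 0)(root P := hh P (root P)), ub = (\<lambda>_. \<infinity>)\<rparr>"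

text \<open>Step (1): descend from the root (nondeterministic tie-breaking among minimizers).\<close>
inductive walk :: "inst \<Rightarrow> st \<Rightarrow> node \<Rightarrow> node \<Rightarrow> bool" for P s where
  stop: "u \<notin> ex s \<Longrightarrow> walk P s u u"
| go: "u \<in> ex s \<Longrightarrow> a \<in> andch P u \<Longrightarrow>
     (\<forall>a'\<in>andch P u. ecost P u a + lbA P s a \<le> ecost P u a' + lbA P s a') \<Longrightarrow>
     walk P s (if gap s (ch0 P a) > gap s (ch1 P a) then ch0 P a else ch1 P a) u' \<Longrightarrow>
     walk P s u u'"

definition expand :: "inst \<Rightarrow> st \<Rightarrow> node \<Rightarrow> st" where
  "expand P s u = s\<lparr>ex := insert u (ex s),
      gp := gp s \<union> {tchild u} \<union> andch P u \<union> ch0 P ` andch P u \<union> ch1 P ` andch P u,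
      lb := (\<lambda>v. if v \<in> ch0 P ` andch P u \<union> ch1 P ` andch P u then hh P v else lb s v)\<rparr>"

definition valL :: "inst \<Rightarrow> st \<Rightarrow> node \<Rightarrow> ereal" where
  "valL P s u = min (INF a\<in>andch P u. ecost P u a + lbA P s a) (ecost P u (tchild u))"

definition valU :: "inst \<Rightarrow> st \<Rightarrow> node \<Rightarrow> ereal" where
  "valU P s u = min (INF a\<in>andch P u. ecost P u a + ubA P s a) (ecost P u (tchild u))"

definition parents :: "inst \<Rightarrow> st \<Rightarrow> node \<Rightarrow> node set" where
  "parents P s u = {ORn I d | I d f. ANDn I d f \<in> gp s \<and> ORn I d \<in> gp s \<and>
       (ch0 P (ANDn I d f) = u \<or> ch1 P (ANDn I d f) = u)}"

text \<open>Step (3): lower-bound propagation (nondeterministic among nodes of maximal depth).\<close>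
inductive propL :: "inst \<Rightarrow> st \<Rightarrow> node set \<Rightarrow> st \<Rightarrow> bool" for P where
  finish: "propL P s {} s"
| upd: "u \<in> Q \<Longrightarrow> (\<forall>w\<in>Q. depth w \<le> depth u) \<Longrightarrow>
     propL P (if valL P s u > lb s u then s\<lparr>lb := (lb s)(u := valL P s u)\<rparr> else s)
             ((Q - {u}) \<union> (if valL P s u > lb s u then parents P s u else {})) s' \<Longrightarrow>
     propL P s Q s'"

inductive propU :: "inst \<Rightarrow> st \<Rightarrow> node set \<Rightarrow> st \<Rightarrow> bool" for P where
  finish: "propU P s {} s"
| upd: "u \<in> Q \<Longrightarrow> (\<forall>w\<in>Q. depth w \<le> depth u) \<Longrightarrow>
     propU P (if valU P s u < ub s u then s\<lparr>ub := (ub s)(u := valU P s u)\<rparr> else s)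
             ((Q - {u}) \<union> (if valU P s u < ub s u then parents P s u else {})) s' \<Longrightarrow>
     propU P s Q s'"

inductive maptree_iter :: "inst \<Rightarrow> st \<Rightarrow> st \<Rightarrow> bool" for P where
  "lb s (root P) < ub s (root P) \<Longrightarrow> walk P s (root P) u \<Longrightarrow>
   propL P (expand P s u) {u} s2 \<Longrightarrow> propU P s2 {u} s3 \<Longrightarrow> maptree_iter P s s3"

text \<open>getSolution (nondeterministic choice among minimizing AND children).\<close>
inductive getsol :: "inst \<Rightarrow> st \<Rightarrow> node \<Rightarrow> node set \<Rightarrow> bool" for P s where
  leaf: "is_OR u \<Longrightarrow>
     andch P u = {} \<or> ecost P u (tchild u) \<le> (INF a\<in>andch P u. ecost P u a + ubA P s a) \<Longrightarrow>
     getsol P s u {u, tchild u}"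
| inner: "is_OR u \<Longrightarrow>
     \<not> (andch P u = {} \<or> ecost P u (tchild u) \<le> (INF a\<in>andch P u. ecost P u a + ubA P s a)) \<Longrightarrow>
     a \<in> andch P u \<Longrightarrow>
     ecost P u a + ubA P s a = (INF a'\<in>andch P u. ecost P u a' + ubA P s a') \<Longrightarrow>
     getsol P s (ch0 P a) S0 \<Longrightarrow> getsol P s (ch1 P a) S1 \<Longrightarrow>
     getsol P s u ({u, a} \<union> S0 \<union> S1)"

end

theory Submission
  imports Defs
begin


lemma Beta_pos': "0 < x \<Longrightarrow> 0 < y \<Longrightarrow> 0 < Beta x (y::real)"
  by (simp add: Beta_def)

lemma not_nonpos_pos: "0 < (x::real) \<Longrightarrow> x \<notin> \<int>\<^sub>\<le>\<^sub>0"
  by (auto elim!: nonpos_Ints_cases)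

lemma Beta_left_step: "0<x \<Longrightarrow> 0<y \<Longrightarrow> Beta (x+1) y = Beta x y * x / (x+(y::real))"
  using Beta_plus1_left[of x y] not_nonpos_pos[of x] by (simp add: field_simps)

lemma Beta_right_step: "0<x \<Longrightarrow> 0<y \<Longrightarrow> Beta x (y+1) = Beta x y * y / (x+(y::real))"
  using Beta_plus1_right[of y x] not_nonpos_pos[of y] by (simp add: field_simps)

definition Bt :: "real \<Rightarrow> real \<Rightarrow> nat \<Rightarrow> nat \<Rightarrow> real" where "Bt r1 r0 a b = Beta (real a + r1) (real b + r0)"

lemmas Bt_eq = Bt_def

context fixes r1 r0 :: real assumes r1: "0 < r1" and r0: "0 < r0" begin


lemma Bt_pos: "0 < Bt r1 r0 a b" unfolding Bt_def using r1 r0 by (intro Beta_pos') auto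

lemma Bt_SucL: "Bt r1 r0 (Suc a) b = Bt r1 r0 a b * (real a + r1) / (real a + r1 + real b + r0)"
  unfolding Bt_def using Beta_left_step[of "real a + r1" "real b + r0"] r1 r0
  by (simp add: add_ac)

lemma Bt_SucR: "Bt r1 r0 a (Suc b) = Bt r1 r0 a b * (real b + r0) / (real a + r1 + real b + r0)"
  unfolding Bt_def using Beta_right_step[of "real a + r1" "real b + r0"] r1 r0
  by (simp add: add_ac)

lemma Bt_le: "Bt r1 r0 a b \<le> Bt r1 r0 0 0"
proof -
  have A: "Bt r1 r0 a b \<le> Bt r1 r0 a 0" for a
  proof (induction b)
    case (Suc b)
    have "Bt r1 r0 a (Suc b) \<le> Bt r1 r0 a b"
      unfolding Bt_SucR using Bt_pos[of a b] r1 r0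
      by (simp add: divide_le_eq mult_left_le)
    then show ?case using Suc by simp
  qed simp
  have B: "Bt r1 r0 a 0 \<le> Bt r1 r0 0 0"
  proof (induction a)
    case (Suc a)
    have "Bt r1 r0 (Suc a) 0 \<le> Bt r1 r0 a 0"
      unfolding Bt_SucL using Bt_pos[of a 0] r1 r0
      by (simp add: divide_le_eq mult_left_le)
    then show ?case using Suc by simp
  qed simp
  show ?thesis using A[of a] B by simp
qed

lemma Bt_split: "Bt r1 r0 a b * Bt r1 r0 0 0 \<le> Bt r1 r0 a 0 * Bt r1 r0 0 b"
proof (induction b)
  case (Suc b)
  have f: "(real b + r0) / (real a + r1 + real b + r0) \<le> (real b + r0) / (r1 + real b + r0)"
    using r1 r0 by (intro divide_left_mono) auto
  have "Bt r1 r0 a (Suc b) * Bt r1 r0 0 0 = (Bt r1 r0 a b * Bt r1 r0 0 0) * ((real b + r0) / (real a + r1 + real b + r0))"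
    unfolding Bt_SucR by simp
  also have "\<dots> \<le> (Bt r1 r0 a 0 * Bt r1 r0 0 b) * ((real b + r0) / (r1 + real b + r0))"
    by (rule mult_mono[OF Suc f]) (use r1 r0 in \<open>auto intro!: mult_nonneg_nonneg less_imp_le[OF Bt_pos] divide_nonneg_nonneg\<close>)
  also have "\<dots> = Bt r1 r0 a 0 * Bt r1 r0 0 (Suc b)" unfolding Bt_SucR[of 0] by simp
  finally show ?case .
qed simp

lemma Bt_superL: "Bt r1 r0 a1 0 * Bt r1 r0 a2 0 \<le> Bt r1 r0 (a1 + a2) 0 * Bt r1 r0 0 0"
proof (induction a2)
  case (Suc a2)
  have f: "(real a2 + r1) / (real a2 + r1 + r0) \<le> (real (a1+a2) + r1) / (real (a1+a2) + r1 + r0)"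
    using r1 r0 by (simp add: divide_simps) (simp add: algebra_simps mult_left_mono mult_right_mono)
  have "Bt r1 r0 a1 0 * Bt r1 r0 (Suc a2) 0 = (Bt r1 r0 a1 0 * Bt r1 r0 a2 0) * ((real a2 + r1) / (real a2 + r1 + r0))"
    unfolding Bt_SucL by simp
  also have "\<dots> \<le> (Bt r1 r0 (a1 + a2) 0 * Bt r1 r0 0 0) * ((real (a1+a2) + r1) / (real (a1+a2) + r1 + r0))"
    by (rule mult_mono[OF Suc f]) (use r1 r0 in \<open>auto intro!: mult_nonneg_nonneg less_imp_le[OF Bt_pos] divide_nonneg_nonneg\<close>)
  also have "\<dots> = Bt r1 r0 (a1 + Suc a2) 0 * Bt r1 r0 0 0" using Bt_SucL[of "a1+a2" 0] by simp
  finally show ?case .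
qed simp

lemma Bt_superR: "Bt r1 r0 0 b1 * Bt r1 r0 0 b2 \<le> Bt r1 r0 0 (b1 + b2) * Bt r1 r0 0 0"
proof (induction b2)
  case (Suc b2)
  have f: "(real b2 + r0) / (r1 + real b2 + r0) \<le> (real (b1+b2) + r0) / (r1 + real (b1+b2) + r0)"
    using r1 r0 by (simp add: divide_simps) (simp add: algebra_simps mult_left_mono mult_right_mono)
  have "Bt r1 r0 0 b1 * Bt r1 r0 0 (Suc b2) = (Bt r1 r0 0 b1 * Bt r1 r0 0 b2) * ((real b2 + r0) / (r1 + real b2 + r0))"
    unfolding Bt_SucR by simp
  also have "\<dots> \<le> (Bt r1 r0 0 (b1 + b2) * Bt r1 r0 0 0) * ((real (b1+b2) + r0) / (r1 + real (b1+b2) + r0))"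
    by (rule mult_mono[OF Suc f]) (use r1 r0 in \<open>auto intro!: mult_nonneg_nonneg less_imp_le[OF Bt_pos] divide_nonneg_nonneg\<close>)
  also have "\<dots> = Bt r1 r0 0 (b1 + Suc b2) * Bt r1 r0 0 0" using Bt_SucR[of 0 "b1+b2"] by simp
  finally show ?case .
qed simp

end



fun nset :: "node \<Rightarrow> nat set" where
  "nset (ORn I d) = I" | "nset (TRn I d) = I" | "nset (ANDn I d f) = I"

definition leafc :: "inst \<Rightarrow> nat set \<Rightarrow> nat \<Rightarrow> ereal" where
  "leafc P I d = - elog (pleaf P d I) - elog (ell P (cnt P True I) (cnt P False I))"

function optc :: "inst \<Rightarrow> nat set \<Rightarrow> nat \<Rightarrow> ereal" where
  "optc P I d = min (if d < nF P then (INF f\<in>Vf P I. - elog (pinner P d I) +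
        (optc P (restr P I f False) (Suc d) + optc P (restr P I f True) (Suc d))) else \<infinity>)
      (leafc P I d)"
  by pat_completeness auto
termination by (relation "measures [\<lambda>(P,I,d). nF P - d]") auto

declare optc.simps[simp del]

fun optn :: "inst \<Rightarrow> node \<Rightarrow> ereal" where
  "optn P (ORn I d) = optc P I d" | "optn P _ = 0"

definition gI :: "inst \<Rightarrow> nat set \<Rightarrow> real" where
  "gI P I = - (ln (ell P (cnt P True I) 0) + ln (ell P 0 (cnt P False I)))"

lemma restr_sub: "restr P I f k \<subseteq> I" by (auto simp: restr_def)

lemma restr_disj: "restr P I f False \<inter> restr P I f True = {}" by (auto simp: restr_def)

lemma restr_un: "restr P I f False \<union> restr P I f True = I" by (auto simp: restr_def)

lemma Vf_ne: "f \<in> Vf P I \<Longrightarrow> restr P I f False \<noteq> {} \<and> restr P I f True \<noteq> {}"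
  by (auto simp: Vf_def)

lemma Vf_fin: "finite (Vf P I)" by (auto simp: Vf_def)

lemma cnt_cases: "cnt P k I = cnt P k (restr P I f False) + cnt P k (restr P I f True) \<or> cnt P k I = 0"
proof (cases "finite {i \<in> I. yY P i = k}")
  case True
  have "{i \<in> I. yY P i = k} = {i \<in> restr P I f False. yY P i = k} \<union> {i \<in> restr P I f True. yY P i = k}"
    by (auto simp: restr_def)
  moreover have "{i \<in> restr P I f False. yY P i = k} \<inter> {i \<in> restr P I f True. yY P i = k} = {}"
    by (auto simp: restr_def)
  moreover have "finite {i \<in> restr P I f False. yY P i = k}" "finite {i \<in> restr P I f True. yY P i = k}"
    using True by (auto simp: restr_def elim: rev_finite_subset)
  ultimately show ?thesis unfolding cnt_def by (simp add: card_Un_disjoint)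
next
  case False
  then show ?thesis by (simp add: cnt_def)
qed

context fixes P :: inst
  assumes r1: "rho1 P > 0" and r0: "rho0 P > 0" and a0: "0 < alpha P" and a1: "alpha P < 1"
    and b0: "beta P \<ge> 0"
begin

lemma ell_Bt: "ell P a b = Bt (rho1 P) (rho0 P) a b / Bt (rho1 P) (rho0 P) 0 0"
  unfolding ell_def Bt_eq by simp

lemma ell_pos: "0 < ell P a b"
  unfolding ell_Bt using Bt_pos[OF r1 r0] by simp

lemma ell_le1: "ell P a b \<le> 1"
  unfolding ell_Bt using Bt_pos[OF r1 r0] Bt_le[OF r1 r0] by simp

lemma ell00: "ell P 0 0 = 1"
  unfolding ell_Bt using Bt_pos[OF r1 r0, of 0 0] by simp

lemma ell_split: "ell P a b \<le> ell P a 0 * ell P 0 b"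
proof -
  let ?B = "Bt (rho1 P) (rho0 P)"
  have p: "0 < ?B 0 0" using Bt_pos[OF r1 r0] by simp
  have "?B a b / ?B 0 0 \<le> (?B a 0 / ?B 0 0) * (?B 0 b / ?B 0 0)"
    using Bt_split[OF r1 r0, of a b] p by (simp add: field_simps)
  then show ?thesis unfolding ell_Bt .
qed

lemma ell_superL: "ell P a1 0 * ell P a2 0 \<le> ell P (a1 + a2) 0"
proof -
  let ?B = "Bt (rho1 P) (rho0 P)"
  have p: "0 < ?B 0 0" using Bt_pos[OF r1 r0] by simp
  have "(?B a1 0 / ?B 0 0) * (?B a2 0 / ?B 0 0) \<le> ?B (a1+a2) 0 / ?B 0 0"
    using Bt_superL[OF r1 r0, of a1 a2] p by (simp add: field_simps)
  then show ?thesis unfolding ell_Bt .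
qed

lemma ell_superR: "ell P 0 b1 * ell P 0 b2 \<le> ell P 0 (b1 + b2)"
proof -
  let ?B = "Bt (rho1 P) (rho0 P)"
  have p: "0 < ?B 0 0" using Bt_pos[OF r1 r0] by simp
  have "(?B 0 b1 / ?B 0 0) * (?B 0 b2 / ?B 0 0) \<le> ?B 0 (b1+b2) / ?B 0 0"
    using Bt_superR[OF r1 r0, of b1 b2] p by (simp add: field_simps)
  then show ?thesis unfolding ell_Bt .
qed

lemma ln_ell_le0: "ln (ell P a b) \<le> 0"
  using ell_pos ell_le1 by simp

lemma psplit_pos: "0 < psplit P d"
  unfolding psplit_def using a0 by simp

lemma psplit_le1: "psplit P d \<le> 1"
proof -
  have "1 \<le> (1 + real d) powr beta P" using b0 by (intro ge_one_powr_ge_zero) auto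
  then have "(1 + real d) powr (- beta P) \<le> 1" by (simp add: powr_minus_divide)
  then show ?thesis unfolding psplit_def using a0 a1
    by (metis less_eq_real_def mult_le_one powr_ge_zero)
qed

lemma psplit_lt1: "psplit P d < 1"
proof -
  have "1 \<le> (1 + real d) powr beta P" using b0 by (intro ge_one_powr_ge_zero) auto
  then have "(1 + real d) powr (- beta P) \<le> 1" by (simp add: powr_minus_divide)
  then show ?thesis unfolding psplit_def using a0 a1
    by (smt (verit, best) mult_left_le powr_ge_zero)
qed

lemma pleaf_pos: "0 < pleaf P d I" unfolding pleaf_def using psplit_lt1 by simp
lemma pleaf_le1: "pleaf P d I \<le> 1" unfolding pleaf_def using less_imp_le[OF psplit_pos[of d]] by simp

lemma pinner_pos: "Vf P I \<noteq> {} \<Longrightarrow> 0 < pinner P d I"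
  unfolding pinner_def using psplit_pos[of d] Vf_fin[of P I] by (simp add: card_gt_0_iff less_imp_le)

lemma pinner_le_psplit: "Vf P I \<noteq> {} \<Longrightarrow> pinner P d I \<le> psplit P d"
proof -
  assume ne: "Vf P I \<noteq> {}"
  then have "1 \<le> real (card (Vf P I))" using Vf_fin[of P I] by (simp add: Suc_leI card_gt_0_iff)
  then show ?thesis unfolding pinner_def using ne psplit_pos[of d]
    by (simp add: divide_le_eq mult_le_cancel_left1)
qed

lemma pinner_le1: "Vf P I \<noteq> {} \<Longrightarrow> pinner P d I \<le> 1"
  using pinner_le_psplit psplit_le1 by (meson order_trans)

lemma elog_pos: "0 < p \<Longrightarrow> elog p = ereal (ln p)" by (simp add: elog_def)

lemma leafc_eq: "leafc P I d = ereal (- ln (pleaf P d I) - ln (ell P (cnt P True I) (cnt P False I)))"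
  unfolding leafc_def using pleaf_pos ell_pos by (simp add: elog_pos)

lemma leafc_ge: "ereal (- ln (ell P (cnt P True I) (cnt P False I))) \<le> leafc P I d"
  unfolding leafc_eq using pleaf_pos[of d I] pleaf_le1[of d I] by simp

lemma gI_nonneg: "0 \<le> gI P I"
  unfolding gI_def using ln_ell_le0 by (smt (verit))

lemma gI_leaf: "gI P I \<le> - ln (ell P (cnt P True I) (cnt P False I))"
proof -
  let ?a = "cnt P True I" and ?b = "cnt P False I"
  have "ln (ell P ?a ?b) \<le> ln (ell P ?a 0 * ell P 0 ?b)"
    using ell_split[of ?a ?b] ell_pos[of ?a ?b] ell_pos[of ?a 0] ell_pos[of 0 ?b] by simp
  also have "\<dots> = ln (ell P ?a 0) + ln (ell P 0 ?b)" by (rule ln_mult_pos[OF ell_pos ell_pos])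
  finally show ?thesis unfolding gI_def by simp
qed

lemma gI_split: "gI P I \<le> gI P (restr P I f False) + gI P (restr P I f True)"
proof -
  let ?I0 = "restr P I f False" and ?I1 = "restr P I f True"
  have L: "- ln (ell P (cnt P True I) 0) \<le> - ln (ell P (cnt P True ?I0) 0) + - ln (ell P (cnt P True ?I1) 0)"
  proof (cases "cnt P True I = 0")
    case True
    then show ?thesis using ell00 ln_ell_le0[of "cnt P True ?I0" 0] ln_ell_le0[of "cnt P True ?I1" 0] by simp
  next
    case False
    then have e: "cnt P True I = cnt P True ?I0 + cnt P True ?I1" using cnt_cases by metis
    have "ln (ell P (cnt P True ?I0) 0) + ln (ell P (cnt P True ?I1) 0) =
          ln (ell P (cnt P True ?I0) 0 * ell P (cnt P True ?I1) 0)" by (rule ln_mult_pos[OF ell_pos ell_pos, symmetric])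
    also have "\<dots> \<le> ln (ell P (cnt P True I) 0)" unfolding e
      by (rule ln_mono[OF ell_superL mult_pos_pos[OF ell_pos ell_pos]])
    finally show ?thesis by simp
  qed
  have R: "- ln (ell P 0 (cnt P False I)) \<le> - ln (ell P 0 (cnt P False ?I0)) + - ln (ell P 0 (cnt P False ?I1))"
  proof (cases "cnt P False I = 0")
    case True
    then show ?thesis using ell00 ln_ell_le0[of 0 "cnt P False ?I0"] ln_ell_le0[of 0 "cnt P False ?I1"] by simp
  next
    case False
    then have e: "cnt P False I = cnt P False ?I0 + cnt P False ?I1" using cnt_cases by metis
    have "ln (ell P 0 (cnt P False ?I0)) + ln (ell P 0 (cnt P False ?I1)) =
          ln (ell P 0 (cnt P False ?I0) * ell P 0 (cnt P False ?I1))" by (rule ln_mult_pos[OF ell_pos ell_pos, symmetric])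
    also have "\<dots> \<le> ln (ell P 0 (cnt P False I))" unfolding e
      by (rule ln_mono[OF ell_superR mult_pos_pos[OF ell_pos ell_pos]])
    finally show ?thesis by simp
  qed
  show ?thesis using L R unfolding gI_def by simp
qed

lemma split_term_ge:
  assumes "f \<in> Vf P I"
   and h: "ereal (gI P (restr P I f False)) \<le> optc P (restr P I f False) (Suc d)"
     "ereal (gI P (restr P I f True)) \<le> optc P (restr P I f True) (Suc d)"
  shows "ereal (- ln (psplit P d) + gI P (restr P I f False) + gI P (restr P I f True))
     \<le> - elog (pinner P d I) + (optc P (restr P I f False) (Suc d) + optc P (restr P I f True) (Suc d))"
proof -
  have ne: "Vf P I \<noteq> {}" using assms by auto
  have "ln (pinner P d I) \<le> ln (psplit P d)"
    by (rule ln_mono[OF pinner_le_psplit[OF ne] pinner_pos[OF ne]])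
  then have "ereal (- ln (psplit P d) + gI P (restr P I f False) + gI P (restr P I f True))
      \<le> ereal (- ln (pinner P d I)) + (ereal (gI P (restr P I f False)) + ereal (gI P (restr P I f True)))"
    by simp
  also have "\<dots> \<le> - elog (pinner P d I) + (optc P (restr P I f False) (Suc d) + optc P (restr P I f True) (Suc d))"
    by (rule add_mono) (simp add: elog_pos pinner_pos ne, rule add_mono[OF h])
  finally show ?thesis .
qed

lemma optc_ge_g_aux: "Q = P \<Longrightarrow> ereal (gI Q I) \<le> optc Q I d"
proof (induction Q I d rule: optc.induct)
  case (1 Q I d)
  show ?case
  proof (subst optc.simps, rule min.boundedI)
    show "ereal (gI Q I) \<le> leafc Q I d"
      using leafc_ge[of I d] gI_leaf[of I] 1(3) by (meson ereal_less_eq(3) order_trans)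
    show "ereal (gI Q I) \<le> (if d < nF Q then (INF f\<in>Vf Q I. - elog (pinner Q d I) +
        (optc Q (restr Q I f False) (Suc d) + optc Q (restr Q I f True) (Suc d))) else \<infinity>)"
    proof (cases "d < nF Q")
      case True
      show ?thesis using True
      proof (simp, intro INF_greatest)
        fix f assume f: "f \<in> Vf Q I"
        have "ereal (gI Q I) \<le> ereal (- ln (psplit P d) + gI P (restr P I f False) + gI P (restr P I f True))"
        proof -
          have lp: "ln (psplit P d) \<le> 0" using psplit_pos[of d] psplit_le1[of d] by simp
          show ?thesis using gI_split[of I f] 1(3) lp by (simp only: ereal_less_eq(3))
        qed
        also have "\<dots> \<le> - elog (pinner P d I) + (optc P (restr P I f False) (Suc d) + optc P (restr P I f True) (Suc d))"
          using split_term_ge[of f I d] f 1 True by simp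
        finally show "ereal (gI Q I) \<le> - elog (pinner Q d I) + (optc Q (restr Q I f False) (Suc d) + optc Q (restr Q I f True) (Suc d))"
          using 1(3) by simp
      qed
    qed simp
  qed
qed

lemma optc_ge_g: "ereal (gI P I) \<le> optc P I d" using optc_ge_g_aux by simp

lemma optc_nonneg: "0 \<le> optc P I d"
  using optc_ge_g[of I d] gI_nonneg[of I] by (metis ereal_less_eq(5) order_trans)

end


lemma andch_OR: "andch P (ORn I d) = (if d < nF P then ANDn I d ` Vf P I else {})"
proof -
  have "a \<in> andch P (ORn I d) \<longleftrightarrow> a \<in> (if d < nF P then ANDn I d ` Vf P I else {})" for a
    by (cases a) (auto simp: andch_def)
  then show ?thesis by blast
qed

lemma andch_nonOR: "\<not> is_OR u \<Longrightarrow> andch P u = {}"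
proof -
  assume "\<not> is_OR u"
  then show ?thesis
  proof (cases u)
    case (TRn I d) then show ?thesis
      by (auto simp: andch_def elim: edge.elims)
  next
    case (ANDn I d f) then show ?thesis
      by (auto simp: andch_def elim: edge.elims)
  qed simp
qed

lemma valL_OR: "valL P s (ORn I d) = min (if d < nF P then (INF f\<in>Vf P I. - elog (pinner P d I) +
        (lb s (ORn (restr P I f False) (Suc d)) + lb s (ORn (restr P I f True) (Suc d)))) else \<infinity>)
      (leafc P I d)"
  unfolding valL_def andch_OR by (simp add: image_image lbA_def leafc_def)

lemma valU_nonOR: "\<not> is_OR u \<Longrightarrow> valU P s u = 0"
  unfolding valU_def using andch_nonOR[of u P] by (cases u) auto

lemma valL_nonOR: "\<not> is_OR u \<Longrightarrow> valL P s u = 0"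
  unfolding valL_def using andch_nonOR[of u P] by (cases u) auto

definition LBI :: "inst \<Rightarrow> st \<Rightarrow> bool" where "LBI P s = (\<forall>x. lb s x \<le> optn P x)"
definition UBI :: "inst \<Rightarrow> st \<Rightarrow> bool" where "UBI P s = (\<forall>x. valU P s x \<le> ub s x)"

lemma valL_le: assumes "LBI P s" shows "valL P s x \<le> optn P x"
proof (cases x)
  case (ORn I d)
  have "valL P s x \<le> min (if d < nF P then (INF f\<in>Vf P I. - elog (pinner P d I) +
        (optc P (restr P I f False) (Suc d) + optc P (restr P I f True) (Suc d))) else \<infinity>)
      (leafc P I d)"
    unfolding ORn valL_OR
  proof (rule min.mono)
    show "(if d < nF P then (INF f\<in>Vf P I. - elog (pinner P d I) +
        (lb s (ORn (restr P I f False) (Suc d)) + lb s (ORn (restr P I f True) (Suc d)))) else \<infinity>)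
      \<le> (if d < nF P then (INF f\<in>Vf P I. - elog (pinner P d I) +
        (optc P (restr P I f False) (Suc d) + optc P (restr P I f True) (Suc d))) else \<infinity>)"
      using assms unfolding LBI_def
      by (auto intro!: INF_mono' add_mono simp del: optn.simps simp: optn.simps[symmetric])
  qed simp
  also have "\<dots> = optn P x" unfolding ORn by (simp add: optc.simps[of P I d])
  finally show ?thesis .
qed (simp_all add: valL_nonOR)

lemma valU_mono: assumes "\<And>x. ub s1 x \<le> ub s x" shows "valU P s1 x \<le> valU P s x"
  unfolding valU_def ubA_def
  by (intro min.mono INF_mono' add_mono order_refl assms)

lemma propL_inv: "propL P s Q s' \<Longrightarrow> LBI P s \<Longrightarrow> LBI P s' \<and> ub s' = ub s"
proof (induction rule: propL.induct)
  case (finish s)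
  then show ?case by simp
next
  case (upd u Q s s')
  let ?s1 = "if valL P s u > lb s u then s\<lparr>lb := (lb s)(u := valL P s u)\<rparr> else s"
  have "LBI P ?s1" using upd.prems valL_le[OF upd.prems, of u] by (auto simp: LBI_def)
  moreover have "ub ?s1 = ub s" by simp
  ultimately show ?case using upd.IH by simp
qed

lemma propU_inv: "propU P s Q s' \<Longrightarrow> UBI P s \<Longrightarrow> UBI P s' \<and> lb s' = lb s"
proof (induction rule: propU.induct)
  case (finish s)
  then show ?case by simp
next
  case (upd u Q s s')
  let ?s1 = "if valU P s u < ub s u then s\<lparr>ub := (ub s)(u := valU P s u)\<rparr> else s"
  have le: "ub ?s1 x \<le> ub s x" for x by auto
  have "UBI P ?s1" unfolding UBI_def
  proof
    fix x
    have "valU P ?s1 x \<le> valU P s x" by (rule valU_mono[OF le])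
    also have "\<dots> \<le> ub ?s1 x"
      using upd.prems unfolding UBI_def by (cases "x = u") auto
    finally show "valU P ?s1 x \<le> ub ?s1 x" .
  qed
  moreover have "lb ?s1 = lb s" by simp
  ultimately show ?case using upd.IH by simp
qed

lemma valU_expand: "valU P (expand P s u) = valU P s"
  unfolding valU_def ubA_def expand_def by simp

lemma neg_max_ereal: "- max (ereal a) (ereal b) = ereal (min (-a) (-b))"
  by (cases "a \<le> b") (auto simp: max_def min_def)

context fixes P :: inst
  assumes r1: "rho1 P > 0" and r0: "rho0 P > 0" and a0: "0 < alpha P" and a1: "alpha P < 1"
    and b0: "beta P \<ge> 0"
begin

lemma hh_le: "hh P x \<le> optn P x"
proof (cases x)
  case (ORn I d)
  let ?A = "ln (ell P (cnt P True I) (cnt P False I))"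
  let ?B = "ln (psplit P d) + ln (ell P (cnt P True I) 0) + ln (ell P 0 (cnt P False I))"
  have hx: "hh P x = - max (ereal ?A) (ereal ?B)"
  proof -
    have e1: "elog (ell P a b) = ereal (ln (ell P a b))" for a b
      using ell_pos[OF r1 r0 a0 a1 b0, of a b] by (simp add: elog_def)
    have e2: "elog (psplit P d) = ereal (ln (psplit P d))"
      using psplit_pos[OF r1 r0 a0 a1 b0, of d] by (simp add: elog_def)
    show ?thesis unfolding ORn by (simp add: e1 e2)
  qed
  have hA: "hh P x \<le> ereal (- ?A)" unfolding hx
    by (simp add: neg_max_ereal)
  have hB: "hh P x \<le> ereal (- ?B)" unfolding hx
    by (simp add: neg_max_ereal)
  have "hh P x \<le> min (if d < nF P then (INF f\<in>Vf P I. - elog (pinner P d I) +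
        (optc P (restr P I f False) (Suc d) + optc P (restr P I f True) (Suc d))) else \<infinity>)
      (leafc P I d)"
  proof (rule min.boundedI)
    show "hh P x \<le> leafc P I d"
      using hA leafc_ge[OF r1 r0 a0 a1 b0, of I d] by (rule order_trans)
    show "hh P x \<le> (if d < nF P then (INF f\<in>Vf P I. - elog (pinner P d I) +
        (optc P (restr P I f False) (Suc d) + optc P (restr P I f True) (Suc d))) else \<infinity>)"
    proof (cases "d < nF P")
      case True
      show ?thesis using True
      proof (simp, intro INF_greatest)
        fix f assume f: "f \<in> Vf P I"
        have "ereal (- ?B) \<le> ereal (- ln (psplit P d) + gI P (restr P I f False) + gI P (restr P I f True))"
          using gI_split[OF r1 r0 a0 a1 b0, of I f] unfolding gI_def by simp
        also have "\<dots> \<le> - elog (pinner P d I) + (optc P (restr P I f False) (Suc d) + optc P (restr P I f True) (Suc d))"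
          by (rule split_term_ge[OF r1 r0 a0 a1 b0 f optc_ge_g[OF r1 r0 a0 a1 b0] optc_ge_g[OF r1 r0 a0 a1 b0]])
        finally show "hh P x \<le> - elog (pinner P d I) + (optc P (restr P I f False) (Suc d) + optc P (restr P I f True) (Suc d))"
          using hB by (rule order_trans[rotated])
      qed
    qed simp
  qed
  also have "\<dots> = optn P x" unfolding ORn by (simp add: optc.simps[of P I d])
  finally show ?thesis .
qed simp_all

lemma optn_nonneg: "0 \<le> optn P x"
  by (cases x) (simp_all add: optc_nonneg[OF r1 r0 a0 a1 b0])

lemma init_inv: "LBI P (init P) \<and> UBI P (init P)"
  unfolding LBI_def UBI_def init_def using hh_le optn_nonneg by auto

lemma expand_inv: "LBI P s \<Longrightarrow> LBI P (expand P s u)"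
  unfolding LBI_def expand_def using hh_le by auto

lemma iter_inv: "maptree_iter P s s' \<Longrightarrow> LBI P s \<and> UBI P s \<Longrightarrow> LBI P s' \<and> UBI P s'"
proof (induction rule: maptree_iter.induct)
  case (1 s u s2 s3)
  have L2: "LBI P s2" and u2: "ub s2 = ub (expand P s u)"
    using propL_inv[OF 1(3) expand_inv] 1(5) by auto
  have "UBI P (expand P s u)" using 1(5) unfolding UBI_def valU_expand by (simp add: expand_def)
  then have "UBI P s2" unfolding UBI_def valU_def ubA_def u2 by (simp add: valU_def[symmetric] ubA_def[symmetric])
  then have "UBI P s3" and "lb s3 = lb s2" using propU_inv[OF 1(4)] by auto
  moreover have "LBI P s3" using L2 \<open>lb s3 = lb s2\<close> unfolding LBI_def by simp
  ultimately show ?case by simp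
qed

lemma reach_inv: "(maptree_iter P)\<^sup>*\<^sup>* (init P) s \<Longrightarrow> LBI P s \<and> UBI P s"
  by (induction rule: rtranclp_induct) (auto simp: init_inv dest: iter_inv)

end


lemma edge_nset: "edge P x y \<Longrightarrow> nset y \<subseteq> nset x"
  by (induction P x y rule: edge.induct) (auto simp: restr_def)

lemma edge_OR_nset: "edge P (ORn I d) y \<Longrightarrow> nset y = I"
  by (cases y) auto

lemma edge_AND: "edge P (ANDn I d f) w \<Longrightarrow> w = ch0 P (ANDn I d f) \<or> w = ch1 P (ANDn I d f)"
  by (cases w) auto

lemma rtr_nset: "(edge P)\<^sup>*\<^sup>* x y \<Longrightarrow> nset y \<subseteq> nset x"
  by (induction rule: rtranclp_induct) (auto dest: edge_nset)

fun good :: "inst \<Rightarrow> node \<Rightarrow> bool" where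
  "good P (ORn I d) = (I \<noteq> {})" | "good P (TRn I d) = (I \<noteq> {})"
| "good P (ANDn I d f) = (I \<noteq> {} \<and> f \<in> Vf P I)"

lemma edge_good: "edge P x y \<Longrightarrow> good P x \<Longrightarrow> good P y"
  by (induction P x y rule: edge.induct) (auto dest: Vf_ne)

lemma rtr_good: "(edge P)\<^sup>*\<^sup>* x y \<Longrightarrow> good P x \<Longrightarrow> good P y"
  by (induction rule: rtranclp_induct) (auto dest: edge_good)

lemma good_ne: "good P x \<Longrightarrow> nset x \<noteq> {}"
  by (cases x) auto

fun inU :: "inst \<Rightarrow> node \<Rightarrow> bool" where
  "inU P (ORn I d) = (I \<subseteq> {1..nN P} \<and> d \<le> nF P)"
| "inU P (TRn I d) = (I \<subseteq> {1..nN P} \<and> d \<le> nF P)"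
| "inU P (ANDn I d f) = (I \<subseteq> {1..nN P} \<and> d < nF P \<and> f \<le> nF P)"

lemma edge_inU: "edge P x y \<Longrightarrow> inU P x \<Longrightarrow> inU P y"
  by (induction P x y rule: edge.induct) (auto simp: restr_def Vf_def)

lemma reach_inU: "(edge P)\<^sup>*\<^sup>* (root P) x \<Longrightarrow> inU P x"
  by (induction rule: rtranclp_induct) (auto simp: root_def dest: edge_inU)

lemma Gnodes_inU: "x \<in> Gnodes P \<Longrightarrow> inU P x"
  unfolding Gnodes_def using reach_inU by blast

lemma inU_finite: "finite {x. inU P x}"
proof -
  have "{x. inU P x} \<subseteq> (\<lambda>(I,d). ORn I d) ` (Pow {1..nN P} \<times> {..nF P})
     \<union> (\<lambda>(I,d). TRn I d) ` (Pow {1..nN P} \<times> {..nF P})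
     \<union> (\<lambda>(I,d,f). ANDn I d f) ` (Pow {1..nN P} \<times> {..nF P} \<times> {..nF P})"
  proof
    fix x assume "x \<in> {x. inU P x}"
    then show "x \<in> (\<lambda>(I,d). ORn I d) ` (Pow {1..nN P} \<times> {..nF P})
     \<union> (\<lambda>(I,d). TRn I d) ` (Pow {1..nN P} \<times> {..nF P})
     \<union> (\<lambda>(I,d,f). ANDn I d f) ` (Pow {1..nN P} \<times> {..nF P} \<times> {..nF P})"
      by (cases x) (auto simp: image_iff)
  qed
  then show ?thesis by (rule finite_subset) auto
qed

lemma Gnodes_finite: "finite (Gnodes P)"
  using inU_finite[of P] Gnodes_inU[of _ P] by (meson finite_subset mem_Collect_eq subsetI)

definition EE :: "inst \<Rightarrow> node set \<Rightarrow> (node \<times> node) set" where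
  "EE P S = {(u, w). u \<in> S \<and> w \<in> S \<and> edge P u w}"

lemma sol_cost_EE: "sol_cost P S = (\<Sum>(u, w) \<in> EE P S. ecost P u w)"
  unfolding sol_cost_def EE_def ..

lemma EE_fin: "finite S \<Longrightarrow> finite (EE P S)"
  unfolding EE_def by (rule finite_subset[of _ "S \<times> S"]) auto

lemma sum_le_Un:
  fixes f :: "'a \<Rightarrow> ereal"
  assumes "finite A" "finite B" "\<And>x. x \<in> B \<Longrightarrow> 0 \<le> f x"
  shows "sum f (A \<union> B) \<le> sum f A + sum f B"
proof -
  have "sum f (A \<union> B) = sum f A + sum f (B - A)"
    using sum.union_disjoint[of A "B - A" f] assms by (simp add: Un_Diff_cancel)
  also have "sum f (B - A) \<le> sum f B" using assms by (intro sum_mono2) auto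
  then have "sum f A + sum f (B - A) \<le> sum f A + sum f B" by (rule add_left_mono)
  finally show ?thesis .
qed

lemma sum_insert_le:
  fixes f :: "'a \<Rightarrow> ereal"
  assumes "finite A" "0 \<le> f x"
  shows "sum f (insert x A) \<le> f x + sum f A"
proof (cases "x \<in> A")
  case True
  then have "sum f (insert x A) = 0 + sum f A" by (simp add: insert_absorb)
  also have "\<dots> \<le> f x + sum f A" using assms by (intro add_right_mono) auto
  finally show ?thesis .
qed (use assms in simp)

context fixes P :: inst
  assumes r1: "rho1 P > 0" and r0: "rho0 P > 0" and a0: "0 < alpha P" and a1: "alpha P < 1"
    and b0: "beta P \<ge> 0"
begin

lemma ecost_nonneg: "edge P u w \<Longrightarrow> 0 \<le> ecost P u w"
proof (cases u)
  case (ORn I d)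
  assume e: "edge P u w"
  show ?thesis
  proof (cases w)
    case (TRn J e)
    then have "ecost P u w = leafc P I d" using e ORn by (simp add: leafc_def)
    also have "leafc P I d = ereal (- ln (pleaf P d I) - ln (ell P (cnt P True I) (cnt P False I)))"
      by (rule leafc_eq[OF r1 r0 a0 a1 b0])
    moreover have "ln (pleaf P d I) \<le> 0"
      using pleaf_pos[OF r1 r0 a0 a1 b0, of d I] pleaf_le1[OF r1 r0 a0 a1 b0, of d I] by simp
    ultimately show ?thesis
      using ln_ell_le0[OF r1 r0 a0 a1 b0, of "cnt P True I" "cnt P False I"] by simp
  next
    case (ANDn J e' f)
    then have f: "f \<in> Vf P I" and ne: "Vf P I \<noteq> {}" using e ORn by auto
    have "ecost P u w = ereal (- ln (pinner P d I))"
      using ORn ANDn pinner_pos[OF r1 r0 a0 a1 b0 ne, of d] by (simp add: elog_def)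
    then show ?thesis
      using pinner_pos[OF r1 r0 a0 a1 b0 ne, of d] pinner_le1[OF r1 r0 a0 a1 b0 ne, of d] by simp
  next
    case (ORn J e)
    then show ?thesis using e \<open>u = ORn I d\<close> by simp
  qed
next
  case (TRn I d) then show ?thesis by simp
next
  case (ANDn I d f) then show ?thesis by (cases w) simp_all
qed

end


definition ES :: "inst \<Rightarrow> node set \<Rightarrow> node \<Rightarrow> node \<Rightarrow> bool" where
  "ES P S = (\<lambda>u w. edge P u w \<and> u \<in> S \<and> w \<in> S)"

definition solp :: "inst \<Rightarrow> node \<Rightarrow> node set \<Rightarrow> bool" where
  "solp P u S \<longleftrightarrow> u \<in> S \<and> finite S \<and> (\<forall>y\<in>S. nset y \<subseteq> nset u) \<and> (nset u \<noteq> {} \<longrightarrow> (\<forall>y\<in>S. nset y \<noteq> {}))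
     \<and> (\<forall>v\<in>S. (ES P S)\<^sup>*\<^sup>* u v) \<and> (\<forall>a\<in>S. is_AND a \<longrightarrow> (\<forall>w. edge P a w \<longrightarrow> w \<in> S))
     \<and> (\<forall>v\<in>S. is_OR v \<longrightarrow> (\<exists>!w. w \<in> S \<and> edge P v w))"

lemma ES_mono: "S \<subseteq> T \<Longrightarrow> (ES P S)\<^sup>*\<^sup>* x y \<Longrightarrow> (ES P T)\<^sup>*\<^sup>* x y"
  by (rule rtranclp_mono[THEN predicate2D, rotated]) (auto simp: ES_def)

context fixes P :: inst
  assumes r1: "rho1 P > 0" and r0: "rho0 P > 0" and a0: "0 < alpha P" and a1: "alpha P < 1"
    and b0: "beta P \<ge> 0"
begin

lemma EE_nonneg: "x \<in> EE P S \<Longrightarrow> 0 \<le> (case x of (u, w) \<Rightarrow> ecost P u w)"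
  unfolding EE_def using ecost_nonneg[OF r1 r0 a0 a1 b0] by auto

lemma getsol_main: "getsol P s u S \<Longrightarrow> UBI P s \<Longrightarrow> solp P u S \<and> sol_cost P S \<le> valU P s u"
proof (induction rule: getsol.induct)
  case (leaf u)
  obtain I d where u: "u = ORn I d" using leaf.hyps(1) by (cases u) auto
  have S: "{u, tchild u} = {ORn I d, TRn I d}" using u by simp
  have E: "EE P {ORn I d, TRn I d} = {(ORn I d, TRn I d)}" unfolding EE_def by auto
  have sp: "solp P u {u, tchild u}" unfolding S solp_def u
    by (auto simp: ES_def intro: r_into_rtranclp)
  have "sol_cost P {u, tchild u} = ecost P u (tchild u)"
    unfolding sol_cost_EE S E using u by simp
  also have "\<dots> = valU P s u"
  proof (cases "andch P u = {}")
    case True then show ?thesis unfolding valU_def by simp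
  next
    case False then show ?thesis using leaf.hyps(2) unfolding valU_def by (simp add: min_absorb2)
  qed
  finally show ?case using sp by simp
next
  case (inner u a S0 S1)
  obtain I d where u: "u = ORn I d" using inner.hyps(1) by (cases u) auto
  obtain f where a: "a = ANDn I d f" and dlt: "d < nF P" and fV: "f \<in> Vf P I"
    using inner.hyps(3) unfolding u andch_OR by (auto split: if_splits)
  define I0 where "I0 = restr P I f False"
  define I1 where "I1 = restr P I f True"
  have c0: "ch0 P a = ORn I0 (Suc d)" and c1: "ch1 P a = ORn I1 (Suc d)"
    unfolding a I0_def I1_def by simp_all
  have ne0: "I0 \<noteq> {}" and ne1: "I1 \<noteq> {}" using Vf_ne[OF fV] unfolding I0_def I1_def by auto
  have disj: "I0 \<inter> I1 = {}" unfolding I0_def I1_def by (rule restr_disj)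
  have sub0: "I0 \<subseteq> I" and sub1: "I1 \<subseteq> I" unfolding I0_def I1_def by (simp_all add: restr_sub)
  have nI0: "\<not> I \<subseteq> I0" using ne1 disj sub1 by blast
  have nI1: "\<not> I \<subseteq> I1" using ne0 disj sub0 by blast
  have IH0: "solp P (ch0 P a) S0" "sol_cost P S0 \<le> valU P s (ch0 P a)" using inner.IH(1) inner.prems by auto
  have IH1: "solp P (ch1 P a) S1" "sol_cost P S1 \<le> valU P s (ch1 P a)" using inner.IH(2) inner.prems by auto
  let ?S = "{u, a} \<union> S0 \<union> S1"
  have S0n: "\<forall>y\<in>S0. nset y \<subseteq> I0 \<and> nset y \<noteq> {}" using IH0(1) ne0 unfolding solp_def c0 by auto
  have S1n: "\<forall>y\<in>S1. nset y \<subseteq> I1 \<and> nset y \<noteq> {}" using IH1(1) ne1 unfolding solp_def c1 by auto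
  have nu: "nset u = I" "nset a = I" unfolding u a by simp_all
  have uS0: "u \<notin> S0" "a \<notin> S0" using S0n nu nI0 by auto
  have uS1: "u \<notin> S1" "a \<notin> S1" using S1n nu nI1 by auto
  have K0: "w \<in> S0" if "x \<in> S0" "w \<in> ?S" "edge P x w" for x w
  proof -
    have "nset w \<subseteq> I0" using edge_nset[OF that(3)] S0n that(1) by blast
    moreover have "w \<noteq> u" "w \<noteq> a" using nu nI0 \<open>nset w \<subseteq> I0\<close> by auto
    moreover have "w \<notin> S1"
    proof
      assume "w \<in> S1" then have "nset w \<subseteq> I1" "nset w \<noteq> {}" using S1n by auto
      then show False using \<open>nset w \<subseteq> I0\<close> disj by blast
    qed
    ultimately show ?thesis using that(2) by blast
  qed
  have K1: "w \<in> S1" if "x \<in> S1" "w \<in> ?S" "edge P x w" for x w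
  proof -
    have "nset w \<subseteq> I1" using edge_nset[OF that(3)] S1n that(1) by blast
    moreover have "w \<noteq> u" "w \<noteq> a" using nu nI1 \<open>nset w \<subseteq> I1\<close> by auto
    moreover have "w \<notin> S0"
    proof
      assume "w \<in> S0" then have "nset w \<subseteq> I0" "nset w \<noteq> {}" using S0n by auto
      then show False using \<open>nset w \<subseteq> I1\<close> disj by blast
    qed
    ultimately show ?thesis using that(2) by blast
  qed
  have Ku: "w = a" if "w \<in> ?S" "edge P u w" for w
  proof -
    have "nset w = I" using edge_OR_nset that(2) unfolding u by blast
    moreover have "w \<noteq> u" using that(2) unfolding u by auto
    ultimately show ?thesis using that(1) S0n S1n nI0 nI1 by auto
  qed
  have Ka: "w = ch0 P a \<or> w = ch1 P a" if "edge P a w" for w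
    using edge_AND that unfolding a by blast
  have eua: "edge P u a" using inner.hyps(3) unfolding andch_def by simp
  have ea0: "edge P a (ch0 P a)" and ea1: "edge P a (ch1 P a)" unfolding a by simp_all
  have ch0S: "ch0 P a \<in> S0" and ch1S: "ch1 P a \<in> S1" using IH0(1) IH1(1) unfolding solp_def by auto
  
  have reach: "\<forall>v\<in>?S. (ES P ?S)\<^sup>*\<^sup>* u v"
  proof
    fix v assume v: "v \<in> ?S"
    have ua: "(ES P ?S)\<^sup>*\<^sup>* u a" using eua by (auto simp: ES_def intro: r_into_rtranclp)
    have ac0: "(ES P ?S)\<^sup>*\<^sup>* u (ch0 P a)"
      using ua ea0 ch0S by (auto simp: ES_def intro: rtranclp.rtrancl_into_rtrancl)
    have ac1: "(ES P ?S)\<^sup>*\<^sup>* u (ch1 P a)"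
      using ua ea1 ch1S by (auto simp: ES_def intro: rtranclp.rtrancl_into_rtrancl)
    show "(ES P ?S)\<^sup>*\<^sup>* u v"
    proof -
      { assume "v \<in> S0"
        then have "(ES P S0)\<^sup>*\<^sup>* (ch0 P a) v" using IH0(1) unfolding solp_def by auto
        then have "(ES P ?S)\<^sup>*\<^sup>* (ch0 P a) v" by (rule ES_mono[rotated]) auto
        then have ?thesis using ac0 by simp }
      moreover
      { assume "v \<in> S1"
        then have "(ES P S1)\<^sup>*\<^sup>* (ch1 P a) v" using IH1(1) unfolding solp_def by auto
        then have "(ES P ?S)\<^sup>*\<^sup>* (ch1 P a) v" by (rule ES_mono[rotated]) auto
        then have ?thesis using ac1 by simp }
      ultimately show ?thesis using v ua by auto
    qed
  qed
  have andp: "\<forall>a'\<in>?S. is_AND a' \<longrightarrow> (\<forall>w. edge P a' w \<longrightarrow> w \<in> ?S)"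
  proof (intro ballI impI allI)
    fix a' w assume a': "a' \<in> ?S" "is_AND a'" and e: "edge P a' w"
    from a' consider "a' = a" | "a' \<in> S0" | "a' \<in> S1" unfolding u by auto
    then show "w \<in> ?S"
    proof cases
      case 1 then show ?thesis using Ka e ch0S ch1S by blast
    next
      case 2 then have "w \<in> S0" using IH0(1) a'(2) e unfolding solp_def by blast
      then show ?thesis by blast
    next
      case 3 then have "w \<in> S1" using IH1(1) a'(2) e unfolding solp_def by blast
      then show ?thesis by blast
    qed
  qed
  have orp: "\<forall>v\<in>?S. is_OR v \<longrightarrow> (\<exists>!w. w \<in> ?S \<and> edge P v w)"
  proof (intro ballI impI)
    fix v assume v: "v \<in> ?S" and vo: "is_OR v"
    from v vo consider "v = u" | "v \<in> S0" | "v \<in> S1" unfolding a by auto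
    then show "\<exists>!w. w \<in> ?S \<and> edge P v w"
    proof cases
      case 1
      show ?thesis
      proof (rule ex1I[of _ a])
        show "a \<in> ?S \<and> edge P v a" using 1 eua by simp
        show "\<And>w. w \<in> ?S \<and> edge P v w \<Longrightarrow> w = a" using 1 Ku by blast
      qed
    next
      case 2
      have o0: "\<forall>v\<in>S0. is_OR v \<longrightarrow> (\<exists>!w. w \<in> S0 \<and> edge P v w)"
        using IH0(1)[unfolded solp_def] by (elim conjE) assumption
      have "\<exists>!w. w \<in> S0 \<and> edge P v w" by (rule mp[OF bspec[OF o0 \<open>v \<in> S0\<close>] vo])
      then show ?thesis
      proof (rule ex1E)
        fix w assume wP: "w \<in> S0 \<and> edge P v w" and wU: "\<forall>y. y \<in> S0 \<and> edge P v y \<longrightarrow> y = w"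
        show ?thesis
        proof (rule ex1I[of _ w])
          show "w \<in> ?S \<and> edge P v w" using wP by simp
          fix w' assume "w' \<in> ?S \<and> edge P v w'"
          then have "w' \<in> S0" using K0[OF 2] by blast
          then show "w' = w" using wU \<open>w' \<in> ?S \<and> edge P v w'\<close> by blast
        qed
      qed
    next
      case 3
      have o0: "\<forall>v\<in>S1. is_OR v \<longrightarrow> (\<exists>!w. w \<in> S1 \<and> edge P v w)"
        using IH1(1)[unfolded solp_def] by (elim conjE) assumption
      have "\<exists>!w. w \<in> S1 \<and> edge P v w" by (rule mp[OF bspec[OF o0 \<open>v \<in> S1\<close>] vo])
      then show ?thesis
      proof (rule ex1E)
        fix w assume wP: "w \<in> S1 \<and> edge P v w" and wU: "\<forall>y. y \<in> S1 \<and> edge P v y \<longrightarrow> y = w"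
        show ?thesis
        proof (rule ex1I[of _ w])
          show "w \<in> ?S \<and> edge P v w" using wP by simp
          fix w' assume "w' \<in> ?S \<and> edge P v w'"
          then have "w' \<in> S1" using K1[OF 3] by blast
          then show "w' = w" using wU \<open>w' \<in> ?S \<and> edge P v w'\<close> by blast
        qed
      qed
    qed
  qed
  have fin: "finite ?S" using IH0(1) IH1(1) unfolding solp_def by auto
  have ns: "\<forall>y\<in>?S. nset y \<subseteq> nset u" using S0n S1n sub0 sub1 nu by blast
  have nn: "\<forall>y\<in>?S. nset y \<noteq> {}" using S0n S1n nu ne0 sub0 by blast
  have sp: "solp P u ?S" unfolding solp_def
    using reach andp orp fin ns nn by blast
  
  let ?c = "\<lambda>(x, y). ecost P x y"
  let ?T = "{(u, a), (a, ch0 P a), (a, ch1 P a)}"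
  have Esub: "EE P ?S \<subseteq> ?T \<union> EE P S0 \<union> EE P S1"
  proof
    fix p assume p: "p \<in> EE P ?S"
    then obtain x w where p': "p = (x, w)" "x \<in> ?S" "w \<in> ?S" "edge P x w" unfolding EE_def by auto
    show "p \<in> ?T \<union> EE P S0 \<union> EE P S1"
    proof -
      { assume "x = u" then have ?thesis using Ku p' by auto }
      moreover { assume "x = a" then have ?thesis using Ka p' by auto }
      moreover { assume "x \<in> S0" then have ?thesis using K0 p' unfolding EE_def by auto }
      moreover { assume "x \<in> S1" then have ?thesis using K1 p' unfolding EE_def by auto }
      ultimately show ?thesis using p' by auto
    qed
  qed
  have fE0: "finite (EE P S0)" and fE1: "finite (EE P S1)"
    using IH0(1) IH1(1) EE_fin unfolding solp_def by auto
  have nT: "\<And>x. x \<in> ?T \<union> EE P S0 \<union> EE P S1 \<Longrightarrow> 0 \<le> ?c x"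
  proof -
    fix x assume "x \<in> ?T \<union> EE P S0 \<union> EE P S1"
    then obtain p q where "x = (p, q)" "edge P p q" using eua ea0 ea1 unfolding EE_def by blast
    then show "0 \<le> ?c x" using ecost_nonneg[OF r1 r0 a0 a1 b0] by simp
  qed
  have "sol_cost P ?S \<le> sum ?c (?T \<union> EE P S0 \<union> EE P S1)"
    unfolding sol_cost_EE using Esub nT fE0 fE1 by (intro sum_mono2) auto
  also have "\<dots> \<le> sum ?c (?T \<union> EE P S0) + sum ?c (EE P S1)"
    using nT fE0 fE1 by (intro sum_le_Un) auto
  also have "sum ?c (?T \<union> EE P S0) \<le> sum ?c ?T + sum ?c (EE P S0)"
    using nT fE0 by (intro sum_le_Un) auto
  also have "sum ?c ?T \<le> ecost P u a"
  proof -
    have "sum ?c ?T \<le> ?c (u, a) + sum ?c {(a, ch0 P a), (a, ch1 P a)}"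
      using ecost_nonneg[OF r1 r0 a0 a1 b0, OF eua] by (intro sum_insert_le) auto
    also have "sum ?c {(a, ch0 P a), (a, ch1 P a)} = 0"
      unfolding a by (intro sum.neutral) auto
    finally show ?thesis by simp
  qed
  finally have "sol_cost P ?S \<le> ecost P u a + sol_cost P S0 + sol_cost P S1"
    unfolding sol_cost_EE by (simp add: add_mono add.assoc)
  also have "\<dots> \<le> ecost P u a + valU P s (ch0 P a) + valU P s (ch1 P a)"
    using IH0(2) IH1(2) by (intro add_mono order_refl)
  also have "\<dots> \<le> ecost P u a + ubA P s a"
    using inner.prems unfolding UBI_def ubA_def by (simp add: add.assoc add_mono)
  also have "\<dots> = valU P s u"
  proof -
    have "\<not> ecost P u (tchild u) \<le> (INF a\<in>andch P u. ecost P u a + ubA P s a)" using inner.hyps(2) by auto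
    then show ?thesis unfolding valU_def inner.hyps(4) by (simp add: min_absorb1)
  qed
  finally show ?case using sp by simp
qed

end


definition Rch :: "inst \<Rightarrow> node set \<Rightarrow> node \<Rightarrow> node set" where
  "Rch P S x = {y. (ES P S)\<^sup>*\<^sup>* x y}"

lemma ES_edge: "(ES P S)\<^sup>*\<^sup>* x y \<Longrightarrow> (edge P)\<^sup>*\<^sup>* x y"
  by (rule rtranclp_mono[THEN predicate2D, rotated]) (auto simp: ES_def)

lemma ES_in: "(ES P S)\<^sup>*\<^sup>* x y \<Longrightarrow> x \<in> S \<Longrightarrow> y \<in> S"
  by (induction rule: rtranclp_induct) (auto simp: ES_def)

lemma sol_sub_G: "is_sol P S \<Longrightarrow> S \<subseteq> Gnodes P"
  unfolding is_sol_def Gnodes_def using ES_edge[of P S "root P"] by (auto simp: ES_def)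

lemma sol_fin: "is_sol P S \<Longrightarrow> finite S"
  using sol_sub_G Gnodes_finite finite_subset by blast

lemma Rch_sub: "x \<in> S \<Longrightarrow> Rch P S x \<subseteq> S"
  unfolding Rch_def using ES_in by blast

lemma Rch_trans: "(ES P S)\<^sup>*\<^sup>* x y \<Longrightarrow> Rch P S y \<subseteq> Rch P S x"
  unfolding Rch_def by auto

lemma EE_mono: "A \<subseteq> B \<Longrightarrow> EE P A \<subseteq> EE P B"
  unfolding EE_def by auto

context fixes P :: inst
  assumes r1: "rho1 P > 0" and r0: "rho0 P > 0" and a0: "0 < alpha P" and a1: "alpha P < 1"
    and b0: "beta P \<ge> 0"
begin

lemma lower_aux:
  assumes sol: "is_sol P S"
  shows "Q = P \<Longrightarrow> ORn I d \<in> S \<Longrightarrow> optc Q I d \<le> sol_cost Q (Rch P S (ORn I d))"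
proof (induction Q I d rule: optc.induct)
  case (1 Q I d)
  have Q: "Q = P" using 1 by simp
  let ?x = "ORn I d"
  let ?c = "\<lambda>(x, y). ecost P x y"
  have xS: "?x \<in> S" using 1 by simp
  have finS: "finite S" using sol_fin[OF sol] .
  have finE: "finite (EE P (Rch P S ?x))"
    by (rule EE_fin, rule finite_subset[OF Rch_sub[OF xS] finS])
  have nonneg: "\<And>p. p \<in> EE P (Rch P S ?x) \<Longrightarrow> 0 \<le> ?c p"
    by (rule EE_nonneg[OF r1 r0 a0 a1 b0])
  have xR: "?x \<in> Rch P S ?x" unfolding Rch_def by simp
  obtain w where wS: "w \<in> S" and ew: "edge P ?x w"
    using sol xS unfolding is_sol_def by fastforce
  have wR: "w \<in> Rch P S ?x" unfolding Rch_def using wS xS ew by (auto simp: ES_def intro: r_into_rtranclp)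
  have xwE: "(?x, w) \<in> EE P (Rch P S ?x)" using xR wR ew unfolding EE_def by simp
  show ?case
  proof (cases w)
    case (ORn J e) then show ?thesis using ew by simp
  next
    case (TRn J e)
    then have w: "w = TRn I d" using ew by simp
    have "optc Q I d \<le> leafc P I d" unfolding Q by (subst optc.simps) simp
    also have "leafc P I d = ?c (?x, w)" unfolding w by (simp add: leafc_def)
    also have "\<dots> = sum ?c {(?x, w)}" by simp
    also have "\<dots> \<le> sum ?c (EE P (Rch P S ?x))"
      using finE xwE nonneg by (intro sum_mono2) auto
    finally show ?thesis unfolding Q sol_cost_EE .
  next
    case (ANDn J e f)
    then have w: "w = ANDn I d f" and dlt: "d < nF P" and fV: "f \<in> Vf P I" using ew by auto
    define I0 where "I0 = restr P I f False"
    define I1 where "I1 = restr P I f True"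
    let ?nA = "ORn I0 (Suc d)" and ?nB = "ORn I1 (Suc d)"
    have ne0: "I0 \<noteq> {}" and ne1: "I1 \<noteq> {}" using Vf_ne[OF fV] unfolding I0_def I1_def by auto
    have disj: "I0 \<inter> I1 = {}" unfolding I0_def I1_def by (rule restr_disj)
    have sub0: "I0 \<subseteq> I" and sub1: "I1 \<subseteq> I" unfolding I0_def I1_def by (simp_all add: restr_sub)
    have nI0: "\<not> I \<subseteq> I0" using ne1 disj sub1 by blast
    have nI1: "\<not> I \<subseteq> I1" using ne0 disj sub0 by blast
    have e0: "edge P w ?nA" and e1: "edge P w ?nB" unfolding w I0_def I1_def by simp_all
    have c0S: "?nA \<in> S" and c1S: "?nB \<in> S" using sol wS e0 e1 unfolding is_sol_def w by auto
    have xw: "(ES P S)\<^sup>*\<^sup>* ?x w" using xS wS ew by (auto simp: ES_def intro: r_into_rtranclp)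
    have xc0: "(ES P S)\<^sup>*\<^sup>* ?x ?nA"
      using xw wS c0S e0 by (auto simp: ES_def intro: rtranclp.rtrancl_into_rtrancl)
    have xc1: "(ES P S)\<^sup>*\<^sup>* ?x ?nB"
      using xw wS c1S e1 by (auto simp: ES_def intro: rtranclp.rtrancl_into_rtrancl)
    have R0: "Rch P S ?nA \<subseteq> Rch P S ?x" by (rule Rch_trans[OF xc0])
    have R1: "Rch P S ?nB \<subseteq> Rch P S ?x" by (rule Rch_trans[OF xc1])
    have nR0: "\<And>y. y \<in> Rch P S ?nA \<Longrightarrow> nset y \<subseteq> I0 \<and> nset y \<noteq> {}"
    proof -
      fix y assume "y \<in> Rch P S ?nA"
      then have "(edge P)\<^sup>*\<^sup>* ?nA y" unfolding Rch_def using ES_edge by blast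
      then show "nset y \<subseteq> I0 \<and> nset y \<noteq> {}"
        using rtr_nset[of P ?nA y] rtr_good[of P ?nA y] good_ne[of P y] ne0 by auto
    qed
    have nR1: "\<And>y. y \<in> Rch P S ?nB \<Longrightarrow> nset y \<subseteq> I1 \<and> nset y \<noteq> {}"
    proof -
      fix y assume "y \<in> Rch P S ?nB"
      then have "(edge P)\<^sup>*\<^sup>* ?nB y" unfolding Rch_def using ES_edge by blast
      then show "nset y \<subseteq> I1 \<and> nset y \<noteq> {}"
        using rtr_nset[of P ?nB y] rtr_good[of P ?nB y] good_ne[of P y] ne1 by auto
    qed
    let ?EA = "EE P (Rch P S ?nA)" and ?EB = "EE P (Rch P S ?nB)"
    have d01: "?EA \<inter> ?EB = {}"
    proof (rule ccontr)
      assume "?EA \<inter> ?EB \<noteq> {}"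
      then obtain p q where "p \<in> Rch P S ?nA" "p \<in> Rch P S ?nB" unfolding EE_def by blast
      then show False using nR0 nR1 disj by blast
    qed
    have dx: "(?x, w) \<notin> ?EA \<union> ?EB"
    proof
      assume "(?x, w) \<in> ?EA \<union> ?EB"
      then have "?x \<in> Rch P S ?nA \<or> ?x \<in> Rch P S ?nB" unfolding EE_def by blast
      then show False using nR0 nR1 nI0 nI1 by fastforce
    qed
    have finE0: "finite ?EA" and finE1: "finite ?EB"
      using finE EE_mono[OF R0, of P] EE_mono[OF R1, of P] finite_subset by blast+
    have IH0: "optc Q I0 (Suc d) \<le> sol_cost Q (Rch P S ?nA)"
      using 1(1)[of f] dlt fV Q c0S unfolding I0_def by simp
    have IH1: "optc Q I1 (Suc d) \<le> sol_cost Q (Rch P S ?nB)"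
      using 1(2)[of f] dlt fV Q c1S unfolding I1_def by simp
    have "optc Q I d \<le> - elog (pinner P d I) + (optc P I0 (Suc d) + optc P I1 (Suc d))"
    proof -
      have "optc Q I d \<le> (INF f\<in>Vf P I. - elog (pinner P d I) +
        (optc P (restr P I f False) (Suc d) + optc P (restr P I f True) (Suc d)))"
        unfolding Q by (subst optc.simps) (simp add: dlt)
      also have "\<dots> \<le> - elog (pinner P d I) + (optc P I0 (Suc d) + optc P I1 (Suc d))"
        unfolding I0_def I1_def using fV by (rule INF_lower)
      finally show ?thesis .
    qed
    also have "\<dots> \<le> ?c (?x, w) + (sum ?c ?EA + sum ?c ?EB)"
      using IH0 IH1 unfolding Q w sol_cost_EE by (simp add: add_mono)
    also have "\<dots> = sum ?c (insert (?x, w) (?EA \<union> ?EB))"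
      using dx d01 finE0 finE1 by (simp add: sum.union_disjoint)
    also have "\<dots> \<le> sum ?c (EE P (Rch P S ?x))"
      using finE nonneg xwE EE_mono[OF R0, of P] EE_mono[OF R1, of P] by (intro sum_mono2) auto
    finally show ?thesis unfolding Q sol_cost_EE .
  qed
qed

lemma lower: "is_sol P S \<Longrightarrow> optc P {1..nN P} 0 \<le> sol_cost P S"
proof -
  assume sol: "is_sol P S"
  have rS: "root P \<in> S" using sol unfolding is_sol_def by simp
  have "Rch P S (root P) = S"
  proof
    show "Rch P S (root P) \<subseteq> S" by (rule Rch_sub[OF rS])
    show "S \<subseteq> Rch P S (root P)" using sol unfolding is_sol_def Rch_def ES_def by auto
  qed
  then show ?thesis using lower_aux[OF sol refl, of "{1..nN P}" 0] rS by (simp add: root_def)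
qed

end

theorem theorem10:
  fixes P :: inst and s :: st and S :: "node set"
  assumes "rho1 P > 0" and "rho0 P > 0"
    and "0 < alpha P" and "alpha P < 1" and "beta P \<ge> 0"
    and "(maptree_iter P)\<^sup>*\<^sup>* (init P) s"
    and "\<not> (lb s (root P) < ub s (root P))"
    and "getsol P s (root P) S"
  shows "is_min_sol P S"
proof -
  note A = assms(1-5)
  have inv: "LBI P s" "UBI P s" using reach_inv[OF A assms(6)] by auto
  have G: "solp P (root P) S" "sol_cost P S \<le> valU P s (root P)"
    using getsol_main[OF A assms(8) inv(2)] by auto
  have solS: "is_sol P S"
    unfolding is_sol_def using G(1) unfolding solp_def ES_def Gnodes_def by auto
  have "sol_cost P S \<le> lb s (root P)"
  proof -
    have "sol_cost P S \<le> valU P s (root P)" by (rule G(2))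
    also have "\<dots> \<le> ub s (root P)" using inv(2) unfolding UBI_def by simp
    also have "\<dots> \<le> lb s (root P)" using assms(7) by simp
    finally show ?thesis .
  qed
  also have "lb s (root P) \<le> optc P {1..nN P} 0"
    using inv(1) unfolding LBI_def by (metis optn.simps(1) root_def)
  finally have le: "sol_cost P S \<le> optc P {1..nN P} 0" .
  show ?thesis unfolding is_min_sol_def
    using solS le lower[OF A] order_trans by blast
qed


end
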